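(* Let $B\in\mathbb R^{n\times m}$, let $T_{\mathcal U}$ be a symmetric positive definite $m\times m$ matrix, and let $f:\mathbb R^m\to\mathbb R$ be differentiable with $f\in\mathcal S^{1,1}_{\mu_{f,T_{\mathcal U}},L_{f,T_{\mathcal U}}}$ with respect to $T_{\mathcal U}$. For $u_1,u_2\in\mathbb R^m$, $p_1,p_2\in\mathbb R^n$, let $v_i=u_i+T_{\mathcal U}^{-1}B^\top p_i$. Then $$\big(\nabla f(u_1)-\nabla f(u_2),T_{\mathcal U}^{-1}B^\top(p_1-p_2)\big)\ge\frac{\mu_{f,T_{\mathcal U}}}{2}\|v_1-v_2\|^2_{T_{\mathcal U}}-\frac{L_{f,T_{\mathcal U}}}{2}\|B^\top(p_1-p_2)\|^2_{T_{\mathcal U}^{-1}}-\frac12\big(\nabla f(u_1)-\nabla f(u_2),u_1-u_2\big).$$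
   Context: For SPD $M$, $\|x\|_M=(Mx,x)^{1/2}$; $D_f(y,x)=f(y)-f(x)-(\nabla f(x),y-x)$; $f\in\mathcal S^{1,1}_{\mu_{f,M},L_{f,M}}$ w.r.t. $M$ means $\frac{\mu_{f,M}}2\|x-y\|_M^2\le D_f(y,x)\le\frac{L_{f,M}}2\|x-y\|_M^2$ for all $x,y$, with $\mu_{f,M}\ge0$. *)

theory Defs
  imports "HOL-Analysis.Analysis"
begin

definition spd :: "real^'m^'m \<Rightarrow> bool" where
  "spd M \<longleftrightarrow> transpose M = M \<and> (\<forall>x. x \<noteq> 0 \<longrightarrow> (M *v x) \<bullet> x > 0)"

definition normM :: "real^'m^'m \<Rightarrow> real^'m \<Rightarrow> real" where
  "normM M x = sqrt ((M *v x) \<bullet> x)"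

definition bregman :: "(real^'m \<Rightarrow> real) \<Rightarrow> (real^'m \<Rightarrow> real^'m) \<Rightarrow> real^'m \<Rightarrow> real^'m \<Rightarrow> real" where
  "bregman f g y x = f y - f x - g x \<bullet> (y - x)"

definition S11 :: "real^'m^'m \<Rightarrow> real \<Rightarrow> real \<Rightarrow> (real^'m \<Rightarrow> real) \<Rightarrow> (real^'m \<Rightarrow> real^'m) \<Rightarrow> bool" where
  "S11 M mu L f g \<longleftrightarrow> mu \<ge> 0 \<and>
     (\<forall>x y. mu / 2 * (normM M (x - y))\<^sup>2 \<le> bregman f g y x \<and>
            bregman f g y x \<le> L / 2 * (normM M (x - y))\<^sup>2)"

end

theory Submission
  imports Defs
begin

lemma spd_inv_right:
  assumes "spd (T::real^'m^'m)"
  shows "T *v (matrix_inv T *v y) = y"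
proof -
  have ker: "\<forall>x. T *v x = 0 \<longrightarrow> x = 0"
  proof (intro allI impI)
    fix x assume "T *v x = 0"
    hence "(T *v x) \<bullet> x = 0" by simp
    thus "x = 0" using assms unfolding spd_def by force
  qed
  hence "invertible T" using invertible_left_inverse matrix_left_invertible_ker by blast
  hence "T ** matrix_inv T = mat 1 \<and> matrix_inv T ** T = mat 1"
    unfolding invertible_def matrix_inv_def by (rule someI_ex)
  thus ?thesis by (metis matrix_vector_mul_assoc matrix_vector_mul_lid)
qed

lemma spd_nonneg:
  assumes "spd (T::real^'m^'m)"
  shows "(normM T x)\<^sup>2 = (T *v x) \<bullet> x"
proof -
  have "(T *v x) \<bullet> x \<ge> 0" using assms unfolding spd_def
    by (cases "x = 0") (auto intro: less_imp_le)
  thus ?thesis unfolding normM_def by simp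
qed

lemma three_point:
  "(gradf u1 - gradf u2) \<bullet> (z - u1) =
     bregman f gradf z u2 - bregman f gradf z u1 - bregman f gradf u1 u2"
  unfolding bregman_def by (simp add: inner_diff_left inner_diff_right algebra_simps)

theorem lemma5p1:
  fixes B :: "real^'m^'n" and T :: "real^'m^'m"
    and f :: "real^'m \<Rightarrow> real" and gradf :: "real^'m \<Rightarrow> real^'m"
    and mu L :: real and u1 u2 :: "real^'m" and p1 p2 :: "real^'n"
  assumes "spd T"
    and "\<And>x. (f has_derivative (\<lambda>h. gradf x \<bullet> h)) (at x)"
    and "S11 T mu L f gradf"
  defines "v1 \<equiv> u1 + matrix_inv T *v (transpose B *v p1)"
    and "v2 \<equiv> u2 + matrix_inv T *v (transpose B *v p2)"
  shows "(gradf u1 - gradf u2) \<bullet> (matrix_inv T *v (transpose B *v (p1 - p2)))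
         \<ge> mu / 2 * (normM T (v1 - v2))\<^sup>2
           - L / 2 * (normM (matrix_inv T) (transpose B *v (p1 - p2)))\<^sup>2
           - 1 / 2 * ((gradf u1 - gradf u2) \<bullet> (u1 - u2))"
proof -
  define y where "y = transpose B *v (p1 - p2)"
  define w where "w = matrix_inv T *v y"
  define d where "d = u1 - u2"
  define g where "g = gradf u1 - gradf u2"
  define D where "D = bregman f gradf"
  have vd: "v1 - v2 = d + w"
    unfolding v1_def v2_def d_def w_def y_def
    by (simp add: matrix_vector_mult_diff_distrib algebra_simps)
  have Tw: "T *v w = y" unfolding w_def using spd_inv_right[OF assms(1)] by simp
  have nw: "(normM T w)\<^sup>2 = y \<bullet> w" using spd_nonneg[OF assms(1)] Tw by simp
  have "(normM (matrix_inv T) y)\<^sup>2 = y \<bullet> w"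
    unfolding normM_def w_def
    by (metis inner_commute nw normM_def power2_eq_square real_sqrt_pow2_iff
        sqrt_le_D w_def zero_le_power2 real_sqrt_pow2 zero_le_square)
  hence nB: "(normM (matrix_inv T) y)\<^sup>2 = (normM T w)\<^sup>2" using nw by simp
  have S: "\<And>x z. mu / 2 * (normM T (x - z))\<^sup>2 \<le> D z x \<and> D z x \<le> L / 2 * (normM T (x - z))\<^sup>2"
    using assms(3) unfolding S11_def D_def by blast
  have m: "\<And>x. normM T (-x) = normM T x"
  proof -
    fix x :: "real^'m"
    have "T *v (-x) = - (T *v x)" by (simp add: matrix_vector_mult_def vec_eq_iff sum_negf)
    then show "normM T (-x) = normM T x" unfolding normM_def by simp
  qed
  have e1: "g \<bullet> w = D (u1 + w) u2 - D (u1 + w) u1 - D u1 u2"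
    using three_point[of gradf u1 u2 "u1 + w" f] unfolding g_def D_def by simp
  have e2: "g \<bullet> w = D (u2 - w) u1 - D (u2 - w) u2 - D u2 u1"
    using three_point[of gradf u2 u1 "u2 - w" f] unfolding g_def D_def
    by (simp add: inner_diff_left inner_minus_right)
  have gd: "g \<bullet> d = D u1 u2 + D u2 u1"
    unfolding g_def d_def D_def bregman_def by (simp add: inner_diff_left inner_diff_right algebra_simps)
  have a1: "D (u1 + w) u2 \<ge> mu/2 * (normM T (d + w))\<^sup>2"
    using S[of u2 "u1 + w"] m[of "d + w"] unfolding d_def by (simp add: algebra_simps)
  have a2: "D (u1 + w) u1 \<le> L/2 * (normM T w)\<^sup>2"
    using S[of u1 "u1 + w"] m[of w] by simp
  have b1: "D (u2 - w) u1 \<ge> mu/2 * (normM T (d + w))\<^sup>2"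
    using S[of u1 "u2 - w"] unfolding d_def by (simp add: algebra_simps)
  have b2: "D (u2 - w) u2 \<le> L/2 * (normM T w)\<^sup>2"
    using S[of u2 "u2 - w"] by simp
  have "g \<bullet> w \<ge> mu/2 * (normM T (d + w))\<^sup>2 - L/2 * (normM T w)\<^sup>2 - 1/2 * (g \<bullet> d)"
    using e1 e2 gd a1 a2 b1 b2 by linarith
  thus ?thesis using vd nB unfolding g_def w_def y_def d_def by simp
qed

end
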